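(* Let $d \ge 1$ and $p>1$. Let $\mu$ be the measure on $\mathbb{R}^d$ with density $\exp(-|x|_1)$, and also denote by $\mu$ its restriction to $\mathbb{R}^d_+=(0,\infty)^d$. Then $M_{\mu}^{\mathcal{B}}$ is bounded on $L^p(\mathbb{R}^d,d\mu)$ if and only if $M_{\mu}^{\mathcal{B}_+}$ is bounded on $L^p(\mathbb{R}^d_+,d\mu)$; and $M_{\mu}^{\mathcal{B}}$ is of weak type $(1,1)$ with respect to $(\mathbb{R}^d,d\mu)$ if and only if $M_{\mu}^{\mathcal{B}_+}$ is of weak type $(1,1)$ with respect to $(\mathbb{R}^d_+,d\mu)$. The same two equivalences hold between $M_{\mu}^{\mathcal{Q}}$ and $M_{\mu}^{\mathcal{Q}_+}$, and between $M_{\mu}^{\mathcal{D}}$ and $M_{\mu}^{\mathcal{D}_+}$.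
   Context: $|x|_q$ denotes the $\ell^q$ norm on $\mathbb{R}^d$. For a metric $\rho$ and measure $\eta$, the non-centered maximal operator is $M_\eta f(x)=\sup \frac{1}{\eta(B)}\int_B|f|\,d\eta$ over open $\rho$-balls $B\ni x$ with $\eta(B)>0$. $M_{\mu}^{\mathcal{B}}, M_{\mu}^{\mathcal{Q}}, M_{\mu}^{\mathcal{D}}$ are these operators on $\mathbb{R}^d$ with the $\ell^2$, $\ell^\infty$, $\ell^1$ metrics respectively. $M_{\mu}^{\mathcal{B}_+}f(x)=\sup \frac{1}{\mu(B)}\int_B|f|\,d\mu$, $x\in\mathbb{R}^d_+$, where the supremum is over sets $B=\{y\in\mathbb{R}^d_+:|y-m|_2<r\}$ with $m\in\mathbb{R}^d_+$, $r>0$, containing $x$ (the open balls of the metric space $(\mathbb{R}^d_+,\rho_2)$); $M_{\mu}^{\mathcal{Q}_+}$ and $M_{\mu}^{\mathcal{D}_+}$ are defined analogously with $|\cdot|_\infty$ and $|\cdot|_1$ in place of $|\cdot|_2$. *)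

theory Defs
  imports "HOL-Analysis.Analysis"
begin

definition l1norm :: "real ^ 'n \<Rightarrow> real" where
  "l1norm x = (\<Sum>i\<in>UNIV. \<bar>x $ i\<bar>)"

definition linfnorm :: "real ^ 'n \<Rightarrow> real" where
  "linfnorm x = (MAX i\<in>UNIV. \<bar>x $ i\<bar>)"

definition rho2 :: "real ^ 'n \<Rightarrow> real ^ 'n \<Rightarrow> real" where
  "rho2 x y = norm (x - y)"

definition rhoinf :: "real ^ 'n \<Rightarrow> real ^ 'n \<Rightarrow> real" where
  "rhoinf x y = linfnorm (x - y)"

definition rho1 :: "real ^ 'n \<Rightarrow> real ^ 'n \<Rightarrow> real" where
  "rho1 x y = l1norm (x - y)"

definition orthant :: "(real ^ 'n) set" where
  "orthant = {x. \<forall>i. 0 < x $ i}"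

definition mu :: "(real ^ 'n) measure" where
  "mu = density lborel (\<lambda>x. ennreal (exp (- l1norm x)))"

definition mu_plus :: "(real ^ 'n) measure" where
  "mu_plus = restrict_space mu orthant"

definition rho_balls :: "('a \<Rightarrow> 'a \<Rightarrow> real) \<Rightarrow> 'a measure \<Rightarrow> 'a set set" where
  "rho_balls \<rho> M = {B. \<exists>m\<in>space M. \<exists>r>0. B = {y\<in>space M. \<rho> y m < r}}"

definition maxop :: "('a \<Rightarrow> 'a \<Rightarrow> real) \<Rightarrow> 'a measure \<Rightarrow> ('a \<Rightarrow> real) \<Rightarrow> 'a \<Rightarrow> ennreal" where
  "maxop \<rho> M f x =
     (SUP B \<in> {B \<in> rho_balls \<rho> M. x \<in> B \<and> 0 < emeasure M B}.
        (\<integral>\<^sup>+ y \<in> B. ennreal \<bar>f y\<bar> \<partial>M) / emeasure M B)"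

definition enn_powr :: "ennreal \<Rightarrow> real \<Rightarrow> ennreal" where
  "enn_powr t p = (if t = \<infinity> then \<infinity> else ennreal (enn2real t powr p))"

definition in_Lp :: "'a measure \<Rightarrow> real \<Rightarrow> ('a \<Rightarrow> real) \<Rightarrow> bool" where
  "in_Lp M p f \<longleftrightarrow> f \<in> borel_measurable M \<and> (\<integral>\<^sup>+ x. ennreal (\<bar>f x\<bar> powr p) \<partial>M) < \<infinity>"

(* maximal operator bounded on L^p(M):  ||Mf||_p <= C ||f||_p  (stated with p-th powers) *)
definition Lp_bounded :: "('a \<Rightarrow> 'a \<Rightarrow> real) \<Rightarrow> 'a measure \<Rightarrow> real \<Rightarrow> bool" where
  "Lp_bounded \<rho> M p \<longleftrightarrow>
     (\<exists>C::real. \<forall>f. in_Lp M p f \<longrightarrow>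
        (\<integral>\<^sup>+ x. enn_powr (maxop \<rho> M f x) p \<partial>M)
          \<le> ennreal C * (\<integral>\<^sup>+ x. ennreal (\<bar>f x\<bar> powr p) \<partial>M))"

definition weak11 :: "('a \<Rightarrow> 'a \<Rightarrow> real) \<Rightarrow> 'a measure \<Rightarrow> bool" where
  "weak11 \<rho> M \<longleftrightarrow>
     (\<exists>C::real. \<forall>f. in_Lp M 1 f \<longrightarrow> (\<forall>t::real. t > 0 \<longrightarrow>
        emeasure M {x \<in> space M. ennreal t < maxop \<rho> M f x}
          \<le> ennreal (C / t) * (\<integral>\<^sup>+ x. ennreal \<bar>f x\<bar> \<partial>M)))"

end

theory Submission
  imports Defs
begin


definition reflS :: "'n::finite set \<Rightarrow> real^'n \<Rightarrow> real^'n" where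
  "reflS S x = (\<chi> i. if i \<in> S then - x$i else x$i)"

definition absv :: "real^'n \<Rightarrow> real^'n" where
  "absv x = (\<chi> i. \<bar>x$i\<bar>)"

lemma refl_nth[simp]: "reflS S x $ i = (if i \<in> S then - x$i else x$i)"
  by (simp add: reflS_def)

lemma absv_nth[simp]: "absv x $ i = \<bar>x$i\<bar>"
  by (simp add: absv_def)

lemma refl_refl[simp]: "reflS S (reflS S x) = x"
  by (simp add: vec_eq_iff)

lemma refl_diff: "reflS S (x - y) = reflS S x - reflS S y"
  by (simp add: vec_eq_iff)

lemma l1norm_refl[simp]: "l1norm (reflS S x) = l1norm x"
  unfolding l1norm_def by (intro sum.cong) auto

lemma continuous_refl: "continuous_on UNIV (reflS S)"
  unfolding reflS_def
proof (intro continuous_on_vec_lambda)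
  fix i show "continuous_on UNIV (\<lambda>x::real^'a. if i \<in> S then - x$i else x$i)"
    by (cases "i \<in> S") (auto intro!: continuous_intros continuous_on_component)
qed

lemma continuous_absv: "continuous_on UNIV absv"
  unfolding absv_def by (intro continuous_on_vec_lambda) (auto intro!: continuous_intros continuous_on_component)

lemma refl_measurable[measurable]: "reflS S \<in> borel_measurable borel"
  using continuous_refl by (rule borel_measurable_continuous_onI)

lemma absv_measurable[measurable]: "absv \<in> borel_measurable borel"
  using continuous_absv by (rule borel_measurable_continuous_onI)

lemma l1norm_measurable[measurable]: "l1norm \<in> borel_measurable borel"
  unfolding l1norm_def by measurable

lemma open_orthant: "open orthant"
proof -
  have "orthant = (\<Inter>i. {x::real^'n. x$i > 0})" by (auto simp: orthant_def)
  moreover have "open (\<Inter>i\<in>UNIV. {x::real^'n. x$i > 0})"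
    by (rule open_INT) (auto intro: open_halfspace_component_gt_cart)
  ultimately show ?thesis by metis
qed

lemma orthant_borel[measurable]: "orthant \<in> sets borel"
  using open_orthant by (rule borel_open)

lemma space_mu[simp]: "space mu = UNIV" by (simp add: mu_def)
lemma sets_mu[simp, measurable_cong]: "sets mu = sets borel" by (simp add: mu_def)
lemma space_mu_plus[simp]: "space mu_plus = orthant" by (simp add: mu_plus_def)
lemma sets_mu_plus: "A \<in> sets mu_plus \<longleftrightarrow> A \<subseteq> orthant \<and> A \<in> sets borel"
  unfolding mu_plus_def by (subst sets_restrict_space_iff) auto

lemma Basis_range: "(Basis :: (real^'n::finite) set) = range (\<lambda>i. axis i 1)"
  by (auto simp: Basis_vec_def)

lemma lborel_refl: "distr lborel borel (reflS S) = (lborel :: (real^'n::finite) measure)"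
proof -
  define c :: "real^'n \<Rightarrow> real" where "c j = (if j \<in> (\<lambda>i. axis i 1) ` S then -1 else 1)" for j
  define T where "T x = (0::real^'n) + (\<Sum>j\<in>Basis. (c j * (x \<bullet> j)) *\<^sub>R j)" for x
  have "lborel = density (distr lborel borel T) (\<lambda>_. (\<Prod>j\<in>Basis. \<bar>c j\<bar>))"
    unfolding T_def by (rule lborel_affine_euclidean) (auto simp: c_def)
  moreover have "(\<Prod>j\<in>Basis. \<bar>c j\<bar>) = 1" by (intro prod.neutral) (auto simp: c_def)
  moreover have "T = reflS S"
  proof
    fix x :: "real^'n"
    have "T x $ k = reflS S x $ k" for k
    proof -
      have "T x $ k = (\<Sum>j\<in>Basis. (c j * (x \<bullet> j)) * (j $ k))" by (simp add: T_def)
      also have "\<dots> = (\<Sum>i\<in>UNIV. (c (axis i 1) * (x \<bullet> axis i 1)) * (axis i (1::real) $ k))"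
        unfolding Basis_range by (subst sum.reindex) (auto simp: inj_on_def axis_eq_axis)
      also have "\<dots> = c (axis k 1) * x $ k"
        by (subst sum.remove[of _ k]) (auto simp: inner_axis, simp add: axis_def)
      also have "\<dots> = reflS S x $ k" by (auto simp: c_def axis_eq_axis)
      finally show ?thesis .
    qed
    then show "T x = reflS S x" by (simp add: vec_eq_iff)
  qed
  ultimately show ?thesis by (simp add: density_1)
qed




lemma AE_lborel_nz: "AE x in (lborel :: (real^'n::finite) measure). \<forall>i. x$i \<noteq> 0"
proof -
  have "AE x in (lborel :: (real^'n) measure). x$i \<noteq> 0" for i
  proof -
    have "{x::real^'n. x$i = 0} \<in> null_sets lebesgue"
      using negligible_standard_hyperplane_cart negligible_iff_null_sets by blast
    moreover have "{x::real^'n. x$i = 0} \<in> sets lborel" by simp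
    ultimately have "{x::real^'n. x$i = 0} \<in> null_sets lborel"
      using null_sets_completion_iff by blast
    then show ?thesis by (rule AE_I') auto
  qed
  then show ?thesis by (subst AE_all_countable) auto
qed

lemma AE_mu_nz: "AE x in (mu :: (real^'n::finite) measure). \<forall>i. x$i \<noteq> 0"
  unfolding mu_def by (subst AE_density) (auto intro: AE_mp[OF AE_lborel_nz])

lemma nn_integral_refl:
  fixes F :: "real^'n::finite \<Rightarrow> ennreal"
  assumes [measurable]: "F \<in> borel_measurable borel"
  shows "(\<integral>\<^sup>+ z. F (reflS S z) \<partial>mu) = integral\<^sup>N mu F"
proof -
  let ?w = "\<lambda>x::real^'n. ennreal (exp (- l1norm x))"
  have "(\<integral>\<^sup>+ z. F (reflS S z) \<partial>mu) = (\<integral>\<^sup>+ z. ?w z * F (reflS S z) \<partial>lborel)"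
    unfolding mu_def by (subst nn_integral_density) auto
  also have "\<dots> = (\<integral>\<^sup>+ z. (\<lambda>y. ?w y * F y) (reflS S z) \<partial>lborel)" by simp
  also have "\<dots> = (\<integral>\<^sup>+ y. ?w y * F y \<partial>distr lborel borel (reflS S))"
    by (subst nn_integral_distr) auto
  also have "\<dots> = (\<integral>\<^sup>+ y. ?w y * F y \<partial>lborel)" by (simp add: lborel_refl)
  also have "\<dots> = integral\<^sup>N mu F"
    unfolding mu_def by (subst nn_integral_density) auto
  finally show ?thesis .
qed

lemma refl_orthant_iff:
  assumes "\<forall>i. y$i \<noteq> 0"
  shows "reflS S y \<in> orthant \<longleftrightarrow> S = {i. y$i < 0}"
proof
  assume "reflS S y \<in> orthant"
  then have "\<forall>i. 0 < (if i \<in> S then - y$i else y$i)" by (simp add: orthant_def)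
  then show "S = {i. y$i < 0}"
    by (auto, metis neg_0_less_iff_less less_asym, metis less_asym)
next
  assume "S = {i. y$i < 0}"
  then show "reflS S y \<in> orthant" using assms by (auto simp: orthant_def)
qed

lemma sum_ind_refl:
  assumes "\<forall>i. y$i \<noteq> 0"
  shows "(\<Sum>S\<in>UNIV. indicator orthant (reflS S y) :: ennreal) = 1"
proof -
  have "(\<Sum>S\<in>UNIV. indicator orthant (reflS S y) :: ennreal) = (\<Sum>S\<in>UNIV. if S = {i. y$i < 0} then 1 else 0)"
    by (intro sum.cong) (auto simp: refl_orthant_iff[OF assms] indicator_def)
  also have "\<dots> = 1" by simp
  finally show ?thesis .
qed

lemma nn_integral_fold:
  fixes F :: "real^'n::finite \<Rightarrow> ennreal"
  assumes [measurable]: "F \<in> borel_measurable borel"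
  shows "integral\<^sup>N mu F = (\<Sum>S\<in>UNIV. \<integral>\<^sup>+ z. F (reflS S z) * indicator orthant z \<partial>mu)"
proof -
  have "integral\<^sup>N mu F = (\<integral>\<^sup>+ y. (\<Sum>S\<in>UNIV. F y * indicator orthant (reflS S y)) \<partial>mu)"
  proof (rule nn_integral_cong_AE)
    show "AE y in mu. F y = (\<Sum>S\<in>UNIV. F y * indicator orthant (reflS S y))"
      using AE_mu_nz by eventually_elim (simp add: sum_distrib_left[symmetric] sum_ind_refl)
  qed
  also have "\<dots> = (\<Sum>S\<in>UNIV. \<integral>\<^sup>+ y. F y * indicator orthant (reflS S y) \<partial>mu)"
    by (rule nn_integral_sum) auto
  also have "\<dots> = (\<Sum>S\<in>UNIV. \<integral>\<^sup>+ z. F (reflS S z) * indicator orthant z \<partial>mu)"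
  proof (rule sum.cong)
    fix S
    have "(\<integral>\<^sup>+ z. F (reflS S z) * indicator orthant z \<partial>mu)
        = (\<integral>\<^sup>+ z. (\<lambda>y. F y * indicator orthant (reflS S y)) (reflS S z) \<partial>mu)" by simp
    also have "\<dots> = (\<integral>\<^sup>+ y. F y * indicator orthant (reflS S y) \<partial>mu)"
      by (rule nn_integral_refl) auto
    finally show "(\<integral>\<^sup>+ y. F y * indicator orthant (reflS S y) \<partial>mu) = (\<integral>\<^sup>+ z. F (reflS S z) * indicator orthant z \<partial>mu)" by simp
  qed simp
  finally show ?thesis .
qed

lemma absv_refl_orthant: "z \<in> orthant \<Longrightarrow> absv (reflS S z) = z"
  by (auto simp: vec_eq_iff orthant_def less_imp_le)

lemma nn_integral_absv:
  fixes F :: "real^'n::finite \<Rightarrow> ennreal"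
  assumes [measurable]: "F \<in> borel_measurable borel"
  shows "(\<integral>\<^sup>+ y. F (absv y) \<partial>mu) = of_nat (card (UNIV :: 'n set set)) * (\<integral>\<^sup>+ z. F z * indicator orthant z \<partial>mu)"
proof -
  have "(\<integral>\<^sup>+ y. F (absv y) \<partial>mu) = (\<Sum>S\<in>UNIV. \<integral>\<^sup>+ z. F (absv (reflS S z)) * indicator orthant z \<partial>mu)"
    by (rule nn_integral_fold) auto
  also have "\<dots> = (\<Sum>S\<in>(UNIV :: 'n set set). \<integral>\<^sup>+ z. F z * indicator orthant z \<partial>mu)"
    by (intro sum.cong nn_integral_cong) (auto simp: absv_refl_orthant indicator_def)
  finally show ?thesis by simp
qed




lemma maxop_le:
  assumes "\<And>B. B \<in> rho_balls \<rho> M \<Longrightarrow> x \<in> B \<Longrightarrow> 0 < emeasure M B \<Longrightarrow>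
             (\<integral>\<^sup>+ y \<in> B. ennreal \<bar>f y\<bar> \<partial>M) \<le> S * emeasure M B"
  shows "maxop \<rho> M f x \<le> S"
  unfolding maxop_def
proof (rule SUP_least)
  fix B assume B: "B \<in> {B \<in> rho_balls \<rho> M. x \<in> B \<and> 0 < emeasure M B}"
  then have "(\<integral>\<^sup>+ y \<in> B. ennreal \<bar>f y\<bar> \<partial>M) \<le> emeasure M B * S"
    using assms[of B] by (simp add: mult.commute)
  then show "(\<integral>\<^sup>+ y \<in> B. ennreal \<bar>f y\<bar> \<partial>M) / emeasure M B \<le> S"
    using B by (intro divide_le_posI_ennreal) simp_all
qed

lemma maxop_ge:
  assumes "B \<in> rho_balls \<rho> M" "x \<in> B" "emeasure M B < \<infinity>" "B \<in> sets M"
  shows "(\<integral>\<^sup>+ y \<in> B. ennreal \<bar>f y\<bar> \<partial>M) \<le> maxop \<rho> M f x * emeasure M B"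
proof (cases "emeasure M B = 0")
  case True
  then have "B \<in> null_sets M" using assms(4) by (simp add: null_sets_def)
  then have "(\<integral>\<^sup>+ y \<in> B. ennreal \<bar>f y\<bar> \<partial>M) = 0" by (rule nn_integral_null_set)
  then show ?thesis by simp
next
  case False
  let ?I = "(\<integral>\<^sup>+ y \<in> B. ennreal \<bar>f y\<bar> \<partial>M)"
  have mem: "B \<in> {B \<in> rho_balls \<rho> M. x \<in> B \<and> 0 < emeasure M B}"
    using assms False by (simp add: zero_less_iff_neq_zero)
  have le: "?I / emeasure M B \<le> maxop \<rho> M f x"
    unfolding maxop_def by (rule SUP_upper[OF mem])
  have "?I / emeasure M B * emeasure M B = ?I * (emeasure M B / emeasure M B)"
    by (rule ennreal_divide_times)
  also have "\<dots> = ?I" using False assms(3) by simp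
  finally have eq: "?I = ?I / emeasure M B * emeasure M B" by simp
  show ?thesis
    by (subst eq) (rule mult_right_mono[OF le zero_le])
qed

lemma maxop_lsc:
  assumes "t < maxop \<rho> M f x"
  obtains B where "B \<in> rho_balls \<rho> M" "x \<in> B" "\<And>y. y \<in> B \<Longrightarrow> t < maxop \<rho> M f y"
proof -
  from assms obtain B where B: "B \<in> {B \<in> rho_balls \<rho> M. x \<in> B \<and> 0 < emeasure M B}"
    and tB: "t < (\<integral>\<^sup>+ y \<in> B. ennreal \<bar>f y\<bar> \<partial>M) / emeasure M B"
    unfolding maxop_def less_SUP_iff by blast
  have "t < maxop \<rho> M f y" if "y \<in> B" for y
  proof -
    have mem: "B \<in> {B \<in> rho_balls \<rho> M. y \<in> B \<and> 0 < emeasure M B}" using B that by simp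
    have "(\<integral>\<^sup>+ y \<in> B. ennreal \<bar>f y\<bar> \<partial>M) / emeasure M B \<le> maxop \<rho> M f y"
      unfolding maxop_def by (rule SUP_upper[OF mem])
    then show ?thesis using tB by (rule less_le_trans[rotated])
  qed
  then show ?thesis using that B by blast
qed

lemma maxop_outside:
  assumes "x \<notin> space M"
  shows "maxop \<rho> M f x = 0"
proof -
  have "{B \<in> rho_balls \<rho> M. x \<in> B \<and> 0 < emeasure M B} = {}"
    using assms unfolding rho_balls_def by blast
  then show ?thesis unfolding maxop_def by (simp only: image_empty Sup_empty bot_ennreal)
qed




locale gnorm =
  fixes N :: "real^'n::finite \<Rightarrow> real" and Kl Ku :: real
  assumes tri: "N (x + y) \<le> N x + N y"
  and hom: "N (c *\<^sub>R x) = \<bar>c\<bar> * N x"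
  and mono_abs: "(\<And>i. \<bar>x$i\<bar> \<le> \<bar>y$i\<bar>) \<Longrightarrow> N x \<le> N y"
  and lowb: "norm x \<le> Kl * N x"
  and upb: "N x \<le> Ku * norm x"
  and Kl: "Kl \<ge> 0" and Ku: "Ku \<ge> 0"
begin

lemma N_zero[simp]: "N 0 = 0"
  using hom[of 0 0] by simp

lemma N_minus: "N (- x) = N x"
  using hom[of "-1" x] by simp

lemma N_commute: "N (x - y) = N (y - x)"
  using N_minus[of "x - y"] by simp

lemma N_nonneg[simp]: "N x \<ge> 0"
  using tri[of x "-x"] N_minus[of x] by simp

lemma N_refl[simp]: "N (reflS S x) = N x"
  by (rule antisym; rule mono_abs; simp)

lemma N_absv_diff: "N (absv u - absv v) \<le> N (u - v)"
  by (rule mono_abs) (simp add: abs_triangle_ineq3)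

lemma N_tri_diff: "N (x - z) \<le> N (x - y) + N (y - z)"
  using tri[of "x - y" "y - z"] by simp

lemma N_cont: "continuous_on UNIV N"
proof (rule lipschitz_on_continuous_on)
  show "Ku-lipschitz_on UNIV N"
  proof (rule lipschitz_onI)
    fix x y :: "real^'n"
    have "N x \<le> N (x - y) + N y" using tri[of "x - y" y] by simp
    moreover have "N y \<le> N (x - y) + N x" using tri[of "y - x" x] N_commute[of x y] by simp
    ultimately have "dist (N x) (N y) \<le> N (x - y)" by (simp add: dist_real_def abs_le_iff)
    also have "\<dots> \<le> Ku * dist x y" using upb by (simp add: dist_norm)
    finally show "dist (N x) (N y) \<le> Ku * dist x y" .
  qed (rule Ku)
qed

lemma N_ball_open: "open {y. N (y - m) < r}"
  by (rule open_Collect_less) (auto intro!: continuous_on_compose2[OF N_cont] continuous_intros)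

lemma N_ball_borel[measurable]: "{y. N (y - m) < r} \<in> sets borel"
  using N_ball_open by (rule borel_open)

lemma N_ball_bounded: "bounded {y. N (y - m) < r}"
proof (rule bounded_subset)
  show "{y. N (y - m) < r} \<subseteq> cball m (Kl * r)"
  proof
    fix y assume "y \<in> {y. N (y - m) < r}"
    then have "N (y - m) \<le> r" by simp
    then have "Kl * N (y - m) \<le> Kl * r" using Kl by (rule mult_left_mono)
    then have "norm (y - m) \<le> Kl * r" using lowb[of "y - m"] by linarith
    then show "y \<in> cball m (Kl * r)" by (simp add: dist_norm norm_minus_commute)
  qed
qed simp

lemma emeasure_mu_le_lborel:
  fixes A :: "(real^'n) set"
  assumes "A \<in> sets borel"
  shows "emeasure mu A \<le> emeasure lborel A"
proof -
  have "emeasure mu A = (\<integral>\<^sup>+ x. ennreal (exp (- l1norm x)) * indicator A x \<partial>lborel)"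
    unfolding mu_def using assms by (subst emeasure_density) auto
  also have "\<dots> \<le> (\<integral>\<^sup>+ x. indicator A x \<partial>lborel)"
  proof (rule nn_integral_mono)
    fix x :: "real^'n"
    have "l1norm x \<ge> 0" unfolding l1norm_def by (auto intro: sum_nonneg)
    then have "ennreal (exp (- l1norm x)) \<le> 1" by simp
    then show "ennreal (exp (- l1norm x)) * indicator A x \<le> indicator A x"
      by (cases "x \<in> A") auto
  qed
  also have "\<dots> = emeasure lborel A" using assms by simp
  finally show ?thesis .
qed

lemma N_ball_finite: "emeasure mu {y. N (y - m) < r} < \<infinity>"
  using emeasure_mu_le_lborel[OF N_ball_borel] emeasure_bounded_finite[OF N_ball_bounded]
  by (rule le_less_trans)

lemma N_subball_finite:
  assumes "A \<subseteq> {y. N (y - m) < r}" "A \<in> sets borel"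
  shows "emeasure mu A < \<infinity>"
  using N_ball_finite emeasure_mono[of A "{y. N (y - m) < r}" mu] assms
  by (simp add: le_less_trans)

lemma balls_mu: "rho_balls (\<lambda>x y. N (x - y)) mu = {B. \<exists>m r. r > 0 \<and> B = {y. N (y - m) < r}}"
  by (auto simp: rho_balls_def)

lemma balls_mu_plus: "rho_balls (\<lambda>x y. N (x - y)) mu_plus =
    {B. \<exists>m\<in>orthant. \<exists>r>0. B = {y\<in>orthant. N (y - m) < r}}"
  by (auto simp: rho_balls_def)

lemma maxop_mu_meas[measurable]: "maxop (\<lambda>x y. N (x - y)) mu f \<in> borel_measurable borel"
proof (rule borel_measurableI_greater)
  fix t
  have "open {x. t < maxop (\<lambda>x y. N (x - y)) mu f x}"
  proof (subst open_subopen, intro ballI)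
    fix x assume "x \<in> {x. t < maxop (\<lambda>x y. N (x - y)) mu f x}"
    then have "t < maxop (\<lambda>x y. N (x - y)) mu f x" by simp
    then obtain B where B: "B \<in> rho_balls (\<lambda>x y. N (x - y)) mu" "x \<in> B"
      "\<And>y. y \<in> B \<Longrightarrow> t < maxop (\<lambda>x y. N (x - y)) mu f y"
      by (rule maxop_lsc) blast
    then show "\<exists>T. open T \<and> x \<in> T \<and> T \<subseteq> {x. t < maxop (\<lambda>x y. N (x - y)) mu f x}"
      unfolding balls_mu using N_ball_open by blast
  qed
  then show "{x \<in> space borel. t < maxop (\<lambda>x y. N (x - y)) mu f x} \<in> sets borel" by simp
qed

lemma maxop_mu_plus_meas[measurable]: "maxop (\<lambda>x y. N (x - y)) mu_plus f \<in> borel_measurable borel"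
proof (rule borel_measurableI_greater)
  fix t
  have "open {x. t < maxop (\<lambda>x y. N (x - y)) mu_plus f x}"
  proof (subst open_subopen, intro ballI)
    fix x assume x: "x \<in> {x. t < maxop (\<lambda>x y. N (x - y)) mu_plus f x}"
    then have "t < maxop (\<lambda>x y. N (x - y)) mu_plus f x" by simp
    then obtain B where B: "B \<in> rho_balls (\<lambda>x y. N (x - y)) mu_plus" "x \<in> B"
      "\<And>y. y \<in> B \<Longrightarrow> t < maxop (\<lambda>x y. N (x - y)) mu_plus f y"
      by (rule maxop_lsc) blast
    then obtain m r where B': "B = orthant \<inter> {y. N (y - m) < r}" unfolding balls_mu_plus by auto
    have "open B" unfolding B' using N_ball_open open_orthant by auto
    then show "\<exists>T. open T \<and> x \<in> T \<and> T \<subseteq> {x. t < maxop (\<lambda>x y. N (x - y)) mu_plus f x}"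
      using B by blast
  qed
  then show "{x \<in> space borel. t < maxop (\<lambda>x y. N (x - y)) mu_plus f x} \<in> sets borel" by simp
qed

end




lemma orthant_mu[simp]: "orthant \<inter> space mu \<in> sets mu" by simp

lemma int_plus:
  assumes "A \<subseteq> orthant"
  shows "(\<integral>\<^sup>+ y \<in> A. h y \<partial>mu_plus) = (\<integral>\<^sup>+ y \<in> A. h y \<partial>mu)"
proof -
  have "(\<integral>\<^sup>+ y \<in> A. h y \<partial>mu_plus) = (\<integral>\<^sup>+ y. (h y * indicator A y) * indicator orthant y \<partial>mu)"
    unfolding mu_plus_def by (rule nn_integral_restrict_space) simp
  also have "\<dots> = (\<integral>\<^sup>+ y \<in> A. h y \<partial>mu)"
    using assms by (intro nn_integral_cong) (auto simp: indicator_def)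
  finally show ?thesis .
qed

lemma emeasure_plus:
  assumes "A \<subseteq> orthant"
  shows "emeasure mu_plus A = emeasure mu A"
  unfolding mu_plus_def using assms by (intro emeasure_restrict_space) auto

lemma absv_orthant: "(\<forall>i. x$i \<noteq> 0) \<Longrightarrow> absv x \<in> orthant"
  by (simp add: orthant_def)

lemma absv_of_orthant: "m \<in> orthant \<Longrightarrow> absv m = m"
  by (auto simp: vec_eq_iff orthant_def less_imp_le)

lemma refl_absv: "reflS {i. m$i < 0} m = absv m"
  by (auto simp: vec_eq_iff)

context gnorm
begin

lemma N_pball_borel[measurable]: "{y\<in>orthant. N (y - m) < r} \<in> sets borel"
proof -
  have "{y\<in>orthant. N (y - m) < r} = orthant \<inter> {y. N (y - m) < r}" by auto
  then show ?thesis using N_ball_borel orthant_borel by (metis sets.Int)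
qed

lemma ball_A:
  assumes "m \<in> orthant"
  shows "emeasure mu {y. N (y - m) < r} \<le> of_nat (card (UNIV :: 'n set set)) * emeasure mu {y\<in>orthant. N (y - m) < r}"
proof -
  let ?B = "{y. N (y - m) < r}" and ?Bp = "{y\<in>orthant. N (y - m) < r}"
  have "emeasure mu ?B = (\<integral>\<^sup>+ y. indicator ?B y \<partial>mu)" by simp
  also have "\<dots> = (\<Sum>S\<in>UNIV. \<integral>\<^sup>+ z. indicator ?B (reflS S z) * indicator orthant z \<partial>mu)"
    by (rule nn_integral_fold) simp
  also have "\<dots> \<le> (\<Sum>S\<in>(UNIV :: 'n set set). \<integral>\<^sup>+ z. indicator ?Bp z \<partial>mu)"
  proof (intro sum_mono nn_integral_mono)
    fix S z
    show "indicator ?B (reflS S z) * indicator orthant z \<le> (indicator ?Bp z :: ennreal)"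
    proof (cases "z \<in> orthant \<and> reflS S z \<in> ?B")
      case True
      then have "N (z - m) = N (absv (reflS S z) - absv m)"
        using assms by (simp add: absv_refl_orthant absv_of_orthant)
      also have "\<dots> \<le> N (reflS S z - m)" by (rule N_absv_diff)
      finally show ?thesis using True by (auto simp: indicator_def)
    qed auto
  qed
  also have "\<dots> = of_nat (card (UNIV :: 'n set set)) * emeasure mu ?Bp"
    using N_pball_borel[of m r] by (simp del: card_UNIV_set)
  finally show ?thesis .
qed

lemma pointwise_A:
  assumes x: "x \<in> orthant"
  shows "maxop (\<lambda>x y. N (x - y)) mu_plus g x
     \<le> of_nat (card (UNIV :: 'n set set)) * maxop (\<lambda>x y. N (x - y)) mu (\<lambda>y. indicator orthant y * g y) x"
proof (rule maxop_le)
  let ?K = "of_nat (card (UNIV :: 'n set set)) :: ennreal"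
  let ?f = "\<lambda>y. indicator orthant y * g y"
  fix B assume B: "B \<in> rho_balls (\<lambda>x y. N (x - y)) mu_plus" "x \<in> B"
  then obtain m r where m: "m \<in> orthant" "r > 0" and Beq: "B = {y\<in>orthant. N (y - m) < r}"
    unfolding balls_mu_plus by auto
  let ?B' = "{y. N (y - m) < r}"
  have "(\<integral>\<^sup>+ y \<in> B. ennreal \<bar>g y\<bar> \<partial>mu_plus) = (\<integral>\<^sup>+ y \<in> B. ennreal \<bar>g y\<bar> \<partial>mu)"
    using Beq by (intro int_plus) auto
  also have "\<dots> = (\<integral>\<^sup>+ y \<in> ?B'. ennreal \<bar>?f y\<bar> \<partial>mu)"
    using Beq by (intro nn_integral_cong) (auto simp: indicator_def)
  also have "\<dots> \<le> maxop (\<lambda>x y. N (x - y)) mu ?f x * emeasure mu ?B'"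
    using B Beq m N_ball_finite[of m r] by (intro maxop_ge) (auto simp: balls_mu)
  also have "\<dots> \<le> maxop (\<lambda>x y. N (x - y)) mu ?f x * (?K * emeasure mu B)"
    using ball_A[OF m(1), of r] Beq by (intro mult_left_mono) auto
  also have "\<dots> = ?K * maxop (\<lambda>x y. N (x - y)) mu ?f x * emeasure mu_plus B"
    using Beq by (simp add: emeasure_plus mult_ac)
  finally show "(\<integral>\<^sup>+ y \<in> B. ennreal \<bar>g y\<bar> \<partial>mu_plus) \<le> ?K * maxop (\<lambda>x y. N (x - y)) mu ?f x * emeasure mu_plus B" .
qed

end




context gnorm
begin

lemma N_one_vec: "N ((d::real) *\<^sub>R (\<chi> i. 1)) = \<bar>d\<bar> * N (\<chi> i. 1)"
  by (rule hom)

lemma closed_center: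
  fixes g :: "real^'n \<Rightarrow> real"
  assumes c: "\<forall>i. c$i \<ge> 0" and x: "x \<in> orthant" "N (x - c) < r"
  and g[measurable]: "g \<in> borel_measurable borel"
  shows "(\<integral>\<^sup>+ y \<in> {y\<in>orthant. N (y - c) < r}. ennreal \<bar>g y\<bar> \<partial>mu_plus)
     \<le> maxop (\<lambda>x y. N (x - y)) mu_plus g x * emeasure mu_plus {y\<in>orthant. N (y - c) < r}"
proof -
  define one :: "real^'n" where "one = (\<chi> i. 1)"
  define N1 where "N1 = N one"
  have N1: "N1 \<ge> 0" by (simp add: N1_def)
  define e where "e = r - N (x - c)"
  have e: "e > 0" using x by (simp add: e_def)
  define d0 where "d0 = e / (2 * N1 + 1)"
  have d0: "d0 > 0" using e N1 by (simp add: d0_def)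
  have d0N1: "2 * d0 * N1 < e"
  proof -
    have "2 * d0 * N1 = e * (2 * N1) / (2 * N1 + 1)" by (simp add: d0_def)
    also have "\<dots> < e" using e N1 by (simp add: field_simps)
    finally show ?thesis .
  qed
  define \<delta> :: "nat \<Rightarrow> real" where "\<delta> n = d0 / real (Suc n)" for n
  have \<delta>pos: "\<delta> n > 0" for n using d0 by (simp add: \<delta>_def)
  have \<delta>le: "\<delta> n \<le> d0" for n using d0 by (simp add: \<delta>_def divide_le_eq)
  have \<delta>dec: "\<delta> (Suc n) \<le> \<delta> n" for n using d0 by (simp add: \<delta>_def frac_le)
  define u where "u n = \<delta> n *\<^sub>R one" for n
  have Nu: "N (u n) = \<delta> n * N1" for n
    using \<delta>pos[of n] by (simp add: u_def N1_def hom)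
  define B where "B n = {y\<in>orthant. N (y - (c + u n)) < r - \<delta> n * N1}" for n
  define Bs where "Bs = {y\<in>orthant. N (y - c) < r}"
  have B_sub: "B n \<subseteq> Bs" for n
  proof
    fix y assume "y \<in> B n"
    then have "y \<in> orthant" "N (y - (c + u n)) < r - \<delta> n * N1" by (auto simp: B_def)
    moreover have "N (y - c) \<le> N (y - (c + u n)) + N (u n)"
      using N_tri_diff[of y c "c + u n"] N_commute[of c "c + u n"] by simp
    ultimately show "y \<in> Bs" using Nu[of n] by (simp add: Bs_def)
  qed
  have B_mono: "B n \<subseteq> B (Suc n)" for n
  proof
    fix y assume "y \<in> B n"
    then have y: "y \<in> orthant" "N (y - (c + u n)) < r - \<delta> n * N1" by (auto simp: B_def)
    have "u n - u (Suc n) = (\<delta> n - \<delta> (Suc n)) *\<^sub>R one" by (simp add: u_def algebra_simps)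
    then have "N (u n - u (Suc n)) = (\<delta> n - \<delta> (Suc n)) * N1"
      using \<delta>dec[of n] by (simp add: N1_def hom)
    moreover have "N (y - (c + u (Suc n))) \<le> N (y - (c + u n)) + N (u n - u (Suc n))"
      using N_tri_diff[of y "c + u (Suc n)" "c + u n"] by (simp add: algebra_simps)
    ultimately have "N (y - (c + u (Suc n))) < r - \<delta> (Suc n) * N1"
      using y(2) by (simp add: algebra_simps)
    then show "y \<in> B (Suc n)" using y(1) by (simp add: B_def)
  qed
  then have B_inc: "incseq B" by (rule incseq_SucI)
  have xB: "x \<in> B n" for n
  proof -
    have "N (x - (c + u n)) \<le> N (x - c) + N (u n)"
      using tri[of "x - c" "- u n"] N_minus[of "u n"] by (simp add: algebra_simps)
    also have "\<dots> = N (x - c) + \<delta> n * N1" by (simp add: Nu)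
    also have "\<dots> < r - \<delta> n * N1"
    proof -
      have A: "\<delta> n * N1 \<le> d0 * N1" using \<delta>le[of n] N1 by (simp add: mult_right_mono)
      have B: "2 * d0 * N1 = 2 * (d0 * N1)" by simp
      show ?thesis using A B d0N1 e_def by linarith
    qed
    finally show ?thesis using x by (simp add: B_def)
  qed
  have B_cover: "\<exists>n. y \<in> B n" if y: "y \<in> Bs" for y
  proof -
    define ey where "ey = r - N (y - c)"
    have ey: "ey > 0" using y by (simp add: ey_def Bs_def)
    obtain n :: nat where n: "2 * d0 * N1 / ey < real n" using reals_Archimedean2 by blast
    have "2 * d0 * N1 < ey * real (Suc n)"
      using n ey by (simp add: divide_less_eq mult.commute distrib_left)
    then have "2 * (\<delta> n * N1) < ey" by (simp add: \<delta>_def field_simps)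
    moreover have "N (y - (c + u n)) \<le> N (y - c) + N (u n)"
      using tri[of "y - c" "- u n"] N_minus[of "u n"] by (simp add: algebra_simps)
    ultimately have "N (y - (c + u n)) < r - \<delta> n * N1" using Nu[of n] by (simp add: ey_def)
    then show ?thesis using y by (auto simp: B_def Bs_def)
  qed
  have B_ball: "B n \<in> rho_balls (\<lambda>x y. N (x - y)) mu_plus" for n
  proof -
    have "c + u n \<in> orthant" using c \<delta>pos[of n] by (auto simp: orthant_def u_def one_def add_nonneg_pos)
    moreover have "r - \<delta> n * N1 > 0"
    proof -
      have "N (x - (c + u n)) < r - \<delta> n * N1" using xB[of n] by (simp add: B_def)
      then show ?thesis using N_nonneg[of "x - (c + u n)"] by linarith
    qed
    ultimately show ?thesis unfolding balls_mu_plus B_def by blast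
  qed
  have B_sets: "B n \<in> sets borel" for n unfolding B_def by (rule N_pball_borel)
  have Bs_sets: "Bs \<in> sets borel" unfolding Bs_def by (rule N_pball_borel)
  have Bs_fin: "emeasure mu Bs < \<infinity>"
    by (rule N_subball_finite[of Bs c r]) (auto simp: Bs_def Bs_sets)
  let ?M = "maxop (\<lambda>x y. N (x - y)) mu_plus g x"
  have termle: "(\<integral>\<^sup>+ y. ennreal \<bar>g y\<bar> * indicator (B n) y \<partial>mu) \<le> ?M * emeasure mu Bs" for n
  proof -
    have "(\<integral>\<^sup>+ y. ennreal \<bar>g y\<bar> * indicator (B n) y \<partial>mu) = (\<integral>\<^sup>+ y \<in> B n. ennreal \<bar>g y\<bar> \<partial>mu_plus)"
      by (rule int_plus[symmetric]) (auto simp: B_def)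
    also have "\<dots> \<le> ?M * emeasure mu_plus (B n)"
    proof (rule maxop_ge[OF B_ball xB])
      have "B n \<subseteq> orthant" by (auto simp: B_def)
      moreover have "emeasure mu (B n) < \<infinity>"
        using emeasure_mono[OF B_sub[of n], of mu] Bs_sets Bs_fin by (metis le_less_trans sets_mu)
      ultimately show "emeasure mu_plus (B n) < \<infinity>" "B n \<in> sets mu_plus"
        using B_sets by (simp_all add: emeasure_plus sets_mu_plus)
    qed
    also have "\<dots> \<le> ?M * emeasure mu Bs"
    proof (intro mult_left_mono)
      have "emeasure mu_plus (B n) = emeasure mu (B n)" by (rule emeasure_plus) (auto simp: B_def)
      also have "\<dots> \<le> emeasure mu Bs" using emeasure_mono[OF B_sub[of n], of mu] Bs_sets by simp
      finally show "emeasure mu_plus (B n) \<le> emeasure mu Bs" .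
    qed simp
    finally show ?thesis .
  qed
  have "(\<integral>\<^sup>+ y \<in> Bs. ennreal \<bar>g y\<bar> \<partial>mu_plus) = (\<integral>\<^sup>+ y \<in> Bs. ennreal \<bar>g y\<bar> \<partial>mu)"
    by (rule int_plus) (auto simp: Bs_def)
  also have "\<dots> = (\<integral>\<^sup>+ y. (SUP n. ennreal \<bar>g y\<bar> * indicator (B n) y) \<partial>mu)"
  proof (rule nn_integral_cong)
    fix y
    show "ennreal \<bar>g y\<bar> * indicator Bs y = (SUP n. ennreal \<bar>g y\<bar> * indicator (B n) y)"
    proof (cases "y \<in> Bs")
      case True
      then obtain n where n: "y \<in> B n" using B_cover by blast
      have "(SUP n. ennreal \<bar>g y\<bar> * indicator (B n) y) = ennreal \<bar>g y\<bar>"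
      proof (rule antisym)
        show "(SUP n. ennreal \<bar>g y\<bar> * indicator (B n) y) \<le> ennreal \<bar>g y\<bar>"
          by (rule SUP_least) (auto simp: indicator_def)
        have "ennreal \<bar>g y\<bar> = ennreal \<bar>g y\<bar> * indicator (B n) y" using n by simp
        also have "\<dots> \<le> (SUP n. ennreal \<bar>g y\<bar> * indicator (B n) y)" by (rule SUP_upper) simp
        finally show "ennreal \<bar>g y\<bar> \<le> (SUP n. ennreal \<bar>g y\<bar> * indicator (B n) y)" .
      qed
      then show ?thesis using True by simp
    next
      case False
      then have "y \<notin> B n" for n using B_sub by blast
      then show ?thesis using False by simp
    qed
  qed
  also have "\<dots> = (SUP n. \<integral>\<^sup>+ y. ennreal \<bar>g y\<bar> * indicator (B n) y \<partial>mu)"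
  proof (rule nn_integral_monotone_convergence_SUP)
    show "incseq (\<lambda>n y. ennreal \<bar>g y\<bar> * indicator (B n) y)"
      using B_inc by (auto simp: incseq_def le_fun_def indicator_def subset_eq)
    show "(\<lambda>y. ennreal \<bar>g y\<bar> * indicator (B n) y) \<in> borel_measurable mu" for n
      using B_sets[of n] by measurable
  qed
  also have "\<dots> \<le> ?M * emeasure mu Bs" by (rule SUP_least) (rule termle)
  also have "\<dots> = ?M * emeasure mu_plus Bs" by (simp add: emeasure_plus Bs_def)
  finally show ?thesis unfolding Bs_def .
qed

end




context gnorm
begin

lemma ball_star_le:
  "emeasure mu {y\<in>orthant. N (y - absv m) < r} \<le> emeasure mu {y. N (y - m) < r}"
proof -
  let ?S0 = "{i. m$i < 0}"
  let ?Bs = "{y\<in>orthant. N (y - absv m) < r}" and ?B = "{y. N (y - m) < r}"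
  have "emeasure mu ?Bs = (\<integral>\<^sup>+ y. indicator ?Bs y \<partial>mu)"
    using N_pball_borel[of "absv m" r] by simp
  also have "\<dots> = (\<integral>\<^sup>+ z. indicator ?Bs (reflS ?S0 z) \<partial>mu)"
    by (rule nn_integral_refl[symmetric]) (simp add: N_pball_borel)
  also have "\<dots> \<le> (\<integral>\<^sup>+ z. indicator ?B z \<partial>mu)"
  proof (rule nn_integral_mono)
    fix z
    have "reflS ?S0 z - absv m = reflS ?S0 (z - m)" by (simp add: refl_diff refl_absv[symmetric])
    then have "N (reflS ?S0 z - absv m) = N (z - m)" by simp
    then show "indicator ?Bs (reflS ?S0 z) \<le> (indicator ?B z :: ennreal)"
      by (auto simp: indicator_def)
  qed
  also have "\<dots> = emeasure mu ?B" by simp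
  finally show ?thesis .
qed

lemma pointwise_B:
  fixes f :: "real^'n \<Rightarrow> real"
  assumes nz: "\<forall>i. x$i \<noteq> 0" and f[measurable]: "f \<in> borel_measurable borel"
  shows "maxop (\<lambda>x y. N (x - y)) mu f x
     \<le> (\<Sum>S\<in>UNIV. maxop (\<lambda>x y. N (x - y)) mu_plus (\<lambda>z. f (reflS S z)) (absv x))"
proof (rule maxop_le)
  let ?R = "(\<Sum>S\<in>UNIV. maxop (\<lambda>x y. N (x - y)) mu_plus (\<lambda>z. f (reflS S z)) (absv x))"
  fix B assume B: "B \<in> rho_balls (\<lambda>x y. N (x - y)) mu" "x \<in> B"
  then obtain m r where r: "r > 0" and Beq: "B = {y. N (y - m) < r}"
    unfolding balls_mu by auto
  let ?Bs = "{y\<in>orthant. N (y - absv m) < r}"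
  have xs: "absv x \<in> orthant" using nz by (rule absv_orthant)
  have xs2: "N (absv x - absv m) < r"
    using N_absv_diff[of x m] B(2) Beq by simp
  have "(\<integral>\<^sup>+ y \<in> B. ennreal \<bar>f y\<bar> \<partial>mu)
      = (\<Sum>S\<in>UNIV. \<integral>\<^sup>+ z. (ennreal \<bar>f (reflS S z)\<bar> * indicator B (reflS S z)) * indicator orthant z \<partial>mu)"
    using Beq by (intro nn_integral_fold) simp
  also have "\<dots> \<le> (\<Sum>S\<in>UNIV. \<integral>\<^sup>+ z \<in> ?Bs. ennreal \<bar>f (reflS S z)\<bar> \<partial>mu)"
  proof (intro sum_mono nn_integral_mono)
    fix S z
    show "ennreal \<bar>f (reflS S z)\<bar> * indicator B (reflS S z) * indicator orthant z
          \<le> ennreal \<bar>f (reflS S z)\<bar> * indicator ?Bs z"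
    proof (cases "z \<in> orthant \<and> reflS S z \<in> B")
      case True
      then have "N (z - absv m) = N (absv (reflS S z) - absv m)"
        by (simp add: absv_refl_orthant)
      also have "\<dots> \<le> N (reflS S z - m)" by (rule N_absv_diff)
      finally show ?thesis using True Beq by (auto simp: indicator_def)
    qed (auto simp: indicator_def)
  qed
  also have "\<dots> = (\<Sum>S\<in>UNIV. \<integral>\<^sup>+ z \<in> ?Bs. ennreal \<bar>f (reflS S z)\<bar> \<partial>mu_plus)"
    by (intro sum.cong int_plus[symmetric]) auto
  also have "\<dots> \<le> (\<Sum>S\<in>UNIV. maxop (\<lambda>x y. N (x - y)) mu_plus (\<lambda>z. f (reflS S z)) (absv x) * emeasure mu_plus ?Bs)"
  proof (intro sum_mono)
    fix S
    show "(\<integral>\<^sup>+ z \<in> ?Bs. ennreal \<bar>f (reflS S z)\<bar> \<partial>mu_plus)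
        \<le> maxop (\<lambda>x y. N (x - y)) mu_plus (\<lambda>z. f (reflS S z)) (absv x) * emeasure mu_plus ?Bs"
      by (rule closed_center) (use xs xs2 in auto)
  qed
  also have "\<dots> = ?R * emeasure mu ?Bs"
    by (simp add: sum_distrib_right emeasure_plus)
  also have "\<dots> \<le> ?R * emeasure mu B"
    using ball_star_le[of m r] Beq by (intro mult_left_mono) auto
  finally show "(\<integral>\<^sup>+ y \<in> B. ennreal \<bar>f y\<bar> \<partial>mu) \<le> ?R * emeasure mu B" .
qed

end




lemma nn_plus: "integral\<^sup>N mu_plus G = (\<integral>\<^sup>+ z. G z * indicator orthant z \<partial>mu)"
  unfolding mu_plus_def by (rule nn_integral_restrict_space) simp

lemma nn_plus_le: "integral\<^sup>N mu_plus G \<le> integral\<^sup>N mu G"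
  unfolding nn_plus by (intro nn_integral_mono) (auto simp: indicator_def)

lemma nn_plus_refl_le:
  assumes [measurable]: "F \<in> borel_measurable borel"
  shows "(\<integral>\<^sup>+ z. F (reflS S z) \<partial>mu_plus) \<le> integral\<^sup>N mu F"
  using nn_plus_le[of "\<lambda>z. F (reflS S z)"] nn_integral_refl[of F S] by simp

lemma meas_plus:
  assumes "h \<in> borel_measurable borel"
  shows "h \<in> borel_measurable mu_plus"
proof -
  have "h \<in> borel_measurable mu" using assms by (simp cong: measurable_cong_sets)
  then show ?thesis unfolding mu_plus_def by (rule measurable_restrict_space1)
qed

lemma in_Lp_refl:
  assumes "in_Lp mu p f"
  shows "in_Lp mu_plus p (\<lambda>z. f (reflS S z))"
proof -
  have f[measurable]: "f \<in> borel_measurable borel" using assms by (simp add: in_Lp_def cong: measurable_cong_sets)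
  have "(\<lambda>z. f (reflS S z)) \<in> borel_measurable mu_plus" by (rule meas_plus) simp
  moreover have "(\<integral>\<^sup>+ z. ennreal (\<bar>f (reflS S z)\<bar> powr p) \<partial>mu_plus) \<le> (\<integral>\<^sup>+ x. ennreal (\<bar>f x\<bar> powr p) \<partial>mu)"
    by (rule nn_plus_refl_le[of "\<lambda>x. ennreal (\<bar>f x\<bar> powr p)"]) simp
  ultimately show ?thesis using assms unfolding in_Lp_def by (meson le_less_trans)
qed

lemma zero_ext_meas:
  fixes g :: "real^'n::finite \<Rightarrow> real"
  assumes "g \<in> borel_measurable mu_plus"
  shows "(\<lambda>y. indicator orthant y * g y) \<in> borel_measurable borel"
proof -
  have "(\<lambda>y. indicator orthant y *\<^sub>R g y) \<in> borel_measurable mu"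
    using assms unfolding mu_plus_def by (subst (asm) borel_measurable_restrict_space_iff) simp_all
  then show ?thesis by (simp cong: measurable_cong_sets)
qed

lemma zero_ext_int:
  fixes g :: "real^'n::finite \<Rightarrow> real"
  assumes "\<phi> 0 = 0"
  shows "(\<integral>\<^sup>+ y. ennreal (\<phi> (indicator orthant y * g y)) \<partial>mu) = (\<integral>\<^sup>+ y. ennreal (\<phi> (g y)) \<partial>mu_plus)"
  unfolding nn_plus using assms by (intro nn_integral_cong) (auto simp: indicator_def)

lemma in_Lp_zero_ext:
  fixes g :: "real^'n::finite \<Rightarrow> real"
  assumes "in_Lp mu_plus p g" "p > 0"
  shows "in_Lp mu p (\<lambda>y. indicator orthant y * g y)"
proof -
  have "(\<integral>\<^sup>+ y. ennreal (\<bar>indicator orthant y * g y\<bar> powr p) \<partial>mu) = (\<integral>\<^sup>+ y. ennreal (\<bar>g y\<bar> powr p) \<partial>mu_plus)"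
    using zero_ext_int[of "\<lambda>t. \<bar>t\<bar> powr p" g] by simp
  moreover have "(\<lambda>y. indicator orthant y * g y) \<in> borel_measurable borel"
    using assms(1) by (intro zero_ext_meas) (simp add: in_Lp_def)
  ultimately show ?thesis using assms unfolding in_Lp_def by (simp cong: measurable_cong_sets)
qed

lemma enn_powr_mono:
  assumes "a \<le> b" "p > 0"
  shows "enn_powr a p \<le> enn_powr b p"
proof (cases "b = \<infinity>")
  case False
  then have "a \<noteq> \<infinity>" using assms by (auto simp: top_unique)
  then show ?thesis using False assms
    by (auto simp: enn_powr_def intro!: ennreal_leI powr_mono2 enn2real_mono simp: less_top)
qed (simp add: enn_powr_def)

lemma enn_powr_scale:
  assumes "k > 0" "p > 0"
  shows "enn_powr (ennreal k * a) p = ennreal (k powr p) * enn_powr a p"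
proof (cases "a = \<infinity>")
  case True
  then show ?thesis using assms by (simp add: enn_powr_def ennreal_mult_top)
next
  case False
  then obtain a' where a: "a = ennreal a'" "a' \<ge> 0" by (cases a) auto
  have "ennreal k * a = ennreal (k * a')" using assms a by (simp add: ennreal_mult)
  then show ?thesis using assms a
    by (simp add: enn_powr_def powr_mult ennreal_mult[symmetric] ennreal_mult_eq_top_iff)
qed

lemma enn_powr_sum:
  assumes "finite A" "A \<noteq> {}" "p > 0"
  shows "enn_powr (\<Sum>s\<in>A. b s) p \<le> ennreal (real (card A) powr p) * (\<Sum>s\<in>A. enn_powr (b s) p)"
proof -
  have "Max (b ` A) \<in> b ` A" using assms by (intro Max_in) auto
  then obtain s0 where s0a: "s0 \<in> A" "b s0 = Max (b ` A)" by auto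
  have s0: "s0 \<in> A" "\<And>s. s \<in> A \<Longrightarrow> b s \<le> b s0"
    using s0a assms by auto
  have "(\<Sum>s\<in>A. b s) \<le> (\<Sum>s\<in>A. b s0)" by (rule sum_mono) (rule s0(2))
  also have "\<dots> = ennreal (real (card A)) * b s0" by (simp add: ennreal_of_nat_eq_real_of_nat)
  finally have "enn_powr (\<Sum>s\<in>A. b s) p \<le> enn_powr (ennreal (real (card A)) * b s0) p"
    using assms by (intro enn_powr_mono) auto
  also have "\<dots> = ennreal (real (card A) powr p) * enn_powr (b s0) p"
    using assms by (intro enn_powr_scale) (auto simp: card_gt_0_iff)
  also have "\<dots> \<le> ennreal (real (card A) powr p) * (\<Sum>s\<in>A. enn_powr (b s) p)"
    using assms s0 by (intro mult_left_mono member_le_sum) auto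
  finally show ?thesis .
qed

lemma enn_powr_meas[measurable]:
  assumes [measurable]: "h \<in> borel_measurable M"
  shows "(\<lambda>x. enn_powr (h x) p) \<in> borel_measurable M"
  unfolding enn_powr_def by measurable

lemma ennreal_div_less:
  assumes "k > 0" "ennreal t < ennreal k * a" "t > 0"
  shows "ennreal (t / k) < a"
proof (cases "a = \<infinity>")
  case False
  then obtain a' where a: "a = ennreal a'" "a' \<ge> 0" by (cases a) auto
  then have "t < k * a'" using assms by (simp add: ennreal_mult[symmetric] ennreal_less_iff)
  then have "t / k < a'" using assms by (simp add: divide_less_eq mult.commute)
  then show ?thesis using a assms by (simp add: ennreal_less_iff)
qed simp

lemma sum_exceeds:
  fixes a :: "'s \<Rightarrow> ennreal"
  assumes "finite A" "A \<noteq> {}" "ennreal t < (\<Sum>s\<in>A. a s)" "t > 0"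
  shows "\<exists>s\<in>A. ennreal (t / real (card A)) < a s"
proof (rule ccontr)
  assume "\<not> ?thesis"
  then have "\<And>s. s \<in> A \<Longrightarrow> a s \<le> ennreal (t / real (card A))" by (auto simp: not_less)
  then have "(\<Sum>s\<in>A. a s) \<le> (\<Sum>s\<in>A. ennreal (t / real (card A)))" by (rule sum_mono)
  also have "\<dots> = ennreal (real (card A)) * ennreal (t / real (card A))"
    by (simp add: ennreal_of_nat_eq_real_of_nat)
  also have "\<dots> = ennreal (real (card A) * (t / real (card A)))"
    using assms by (intro ennreal_mult[symmetric]) auto
  also have "\<dots> = ennreal t" using assms by (simp add: card_gt_0_iff)
  finally show False using assms(3) by simp
qed




lemma card_sets_pos: "card (UNIV :: ('n::finite) set set) > 0"
  by (simp add: card_gt_0_iff)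

context gnorm
begin

lemma Lp_A:
  assumes p: "p > 1" and L: "Lp_bounded (\<lambda>x y. N (x - y)) mu p"
  shows "Lp_bounded (\<lambda>x y. N (x - y)) mu_plus p"
proof -
  let ?K = "card (UNIV :: 'n set set)"
  let ?Kr = "real ?K"
  have Kr: "?Kr > 0" using card_sets_pos by simp
  from L obtain C where C: "\<And>f. in_Lp mu p f \<Longrightarrow>
      (\<integral>\<^sup>+ x. enn_powr (maxop (\<lambda>x y. N (x - y)) mu f x) p \<partial>mu) \<le> ennreal C * (\<integral>\<^sup>+ x. ennreal (\<bar>f x\<bar> powr p) \<partial>mu)"
    unfolding Lp_bounded_def by blast
  define C0 where "C0 = max C 0"
  have C0: "C0 \<ge> 0" "ennreal C \<le> ennreal C0" by (auto simp: C0_def intro: ennreal_leI)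
  show ?thesis unfolding Lp_bounded_def
  proof (rule exI[of _ "?Kr powr p * C0"], intro allI impI)
    fix g :: "real^'n \<Rightarrow> real" assume g: "in_Lp mu_plus p g"
    let ?f = "\<lambda>y. indicator orthant y * g y"
    let ?Mf = "maxop (\<lambda>x y. N (x - y)) mu ?f"
    have f: "in_Lp mu p ?f" using g p by (intro in_Lp_zero_ext) auto
    have fint: "(\<integral>\<^sup>+ y. ennreal (\<bar>?f y\<bar> powr p) \<partial>mu) = (\<integral>\<^sup>+ y. ennreal (\<bar>g y\<bar> powr p) \<partial>mu_plus)"
      using zero_ext_int[of "\<lambda>t. \<bar>t\<bar> powr p" g] by simp
    have "(\<integral>\<^sup>+ x. enn_powr (maxop (\<lambda>x y. N (x - y)) mu_plus g x) p \<partial>mu_plus)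
        \<le> (\<integral>\<^sup>+ x. enn_powr (ennreal ?Kr * ?Mf x) p \<partial>mu_plus)"
    proof (rule nn_integral_mono)
      fix x :: "real^'n" assume "x \<in> space mu_plus"
      then have "maxop (\<lambda>x y. N (x - y)) mu_plus g x \<le> ennreal ?Kr * ?Mf x"
        using pointwise_A[of x g] by (simp add: ennreal_of_nat_eq_real_of_nat)
      then show "enn_powr (maxop (\<lambda>x y. N (x - y)) mu_plus g x) p \<le> enn_powr (ennreal ?Kr * ?Mf x) p"
        using p by (intro enn_powr_mono) auto
    qed
    also have "\<dots> = (\<integral>\<^sup>+ x. ennreal (?Kr powr p) * enn_powr (?Mf x) p \<partial>mu_plus)"
      using Kr p by (intro nn_integral_cong enn_powr_scale) auto
    also have "\<dots> = ennreal (?Kr powr p) * (\<integral>\<^sup>+ x. enn_powr (?Mf x) p \<partial>mu_plus)"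
      by (intro nn_integral_cmult meas_plus) measurable
    also have "\<dots> \<le> ennreal (?Kr powr p) * (\<integral>\<^sup>+ x. enn_powr (?Mf x) p \<partial>mu)"
      by (intro mult_left_mono nn_plus_le) auto
    also have "\<dots> \<le> ennreal (?Kr powr p) * (ennreal C * (\<integral>\<^sup>+ y. ennreal (\<bar>?f y\<bar> powr p) \<partial>mu))"
      by (intro mult_left_mono C f) auto
    also have "\<dots> \<le> ennreal (?Kr powr p) * (ennreal C0 * (\<integral>\<^sup>+ y. ennreal (\<bar>?f y\<bar> powr p) \<partial>mu))"
      using C0 by (intro mult_left_mono mult_right_mono) auto
    also have "\<dots> = ennreal (?Kr powr p * C0) * (\<integral>\<^sup>+ y. ennreal (\<bar>g y\<bar> powr p) \<partial>mu_plus)"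
      using C0 by (simp add: fint ennreal_mult mult.assoc)
    finally show "(\<integral>\<^sup>+ x. enn_powr (maxop (\<lambda>x y. N (x - y)) mu_plus g x) p \<partial>mu_plus)
        \<le> ennreal (?Kr powr p * C0) * (\<integral>\<^sup>+ y. ennreal (\<bar>g y\<bar> powr p) \<partial>mu_plus)" .
  qed
qed

lemma Lp_B:
  assumes p: "p > 1" and L: "Lp_bounded (\<lambda>x y. N (x - y)) mu_plus p"
  shows "Lp_bounded (\<lambda>x y. N (x - y)) mu p"
proof -
  let ?K = "card (UNIV :: 'n set set)"
  let ?Kr = "real ?K"
  have Kr: "?Kr > 0" using card_sets_pos by simp
  from L obtain C where C: "\<And>g. in_Lp mu_plus p g \<Longrightarrow>
      (\<integral>\<^sup>+ x. enn_powr (maxop (\<lambda>x y. N (x - y)) mu_plus g x) p \<partial>mu_plus) \<le> ennreal C * (\<integral>\<^sup>+ x. ennreal (\<bar>g x\<bar> powr p) \<partial>mu_plus)"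
    unfolding Lp_bounded_def by blast
  define C0 where "C0 = max C 0"
  have C0: "C0 \<ge> 0" "ennreal C \<le> ennreal C0" by (auto simp: C0_def intro: ennreal_leI)
  show ?thesis unfolding Lp_bounded_def
  proof (rule exI[of _ "?Kr powr p * ?Kr * ?Kr * C0"], intro allI impI)
    fix f :: "real^'n \<Rightarrow> real" assume f: "in_Lp mu p f"
    have fm[measurable]: "f \<in> borel_measurable borel" using f by (simp add: in_Lp_def cong: measurable_cong_sets)
    let ?I = "(\<integral>\<^sup>+ x. ennreal (\<bar>f x\<bar> powr p) \<partial>mu)"
    let ?h = "\<lambda>S. maxop (\<lambda>x y. N (x - y)) mu_plus (\<lambda>z. f (reflS S z))"
    have hm[measurable]: "?h S \<in> borel_measurable borel" for S by (rule maxop_mu_plus_meas)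
    have gS: "(\<integral>\<^sup>+ z. enn_powr (?h S z) p \<partial>mu_plus) \<le> ennreal C0 * ?I" for S
    proof -
      have "(\<integral>\<^sup>+ z. enn_powr (?h S z) p \<partial>mu_plus) \<le> ennreal C * (\<integral>\<^sup>+ z. ennreal (\<bar>f (reflS S z)\<bar> powr p) \<partial>mu_plus)"
        by (intro C in_Lp_refl f)
      also have "\<dots> \<le> ennreal C0 * ?I"
        using C0 by (intro mult_mono nn_plus_refl_le[of "\<lambda>x. ennreal (\<bar>f x\<bar> powr p)"]) auto
      finally show ?thesis .
    qed
    have "(\<integral>\<^sup>+ x. enn_powr (maxop (\<lambda>x y. N (x - y)) mu f x) p \<partial>mu)
        \<le> (\<integral>\<^sup>+ x. ennreal (?Kr powr p) * (\<Sum>S\<in>UNIV. enn_powr (?h S (absv x)) p) \<partial>mu)"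
    proof (rule nn_integral_mono_AE)
      show "AE x in mu. enn_powr (maxop (\<lambda>x y. N (x - y)) mu f x) p
          \<le> ennreal (?Kr powr p) * (\<Sum>S\<in>UNIV. enn_powr (?h S (absv x)) p)"
        using AE_mu_nz
      proof eventually_elim
        case (elim x)
        have "enn_powr (maxop (\<lambda>x y. N (x - y)) mu f x) p \<le> enn_powr (\<Sum>S\<in>UNIV. ?h S (absv x)) p"
          using pointwise_B[OF elim fm] p by (intro enn_powr_mono) auto
        also have "\<dots> \<le> ennreal (?Kr powr p) * (\<Sum>S\<in>UNIV. enn_powr (?h S (absv x)) p)"
          using p by (intro enn_powr_sum) auto
        finally show ?case .
      qed
    qed
    also have "\<dots> = ennreal (?Kr powr p) * (\<Sum>S\<in>UNIV. \<integral>\<^sup>+ x. enn_powr (?h S (absv x)) p \<partial>mu)"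
      by (subst nn_integral_cmult) (measurable, subst nn_integral_sum, auto)
    also have "\<dots> = ennreal (?Kr powr p) * (\<Sum>S\<in>UNIV. of_nat ?K * (\<integral>\<^sup>+ z. enn_powr (?h S z) p \<partial>mu_plus))"
      by (intro arg_cong2[where f="(*)"] sum.cong refl)
         (subst nn_integral_absv[of "\<lambda>z. enn_powr (?h S z) p" for S], measurable, simp add: nn_plus)
    also have "\<dots> \<le> ennreal (?Kr powr p) * (\<Sum>S\<in>(UNIV :: 'n set set). of_nat ?K * (ennreal C0 * ?I))"
      by (intro mult_left_mono sum_mono gS) auto
    also have "\<dots> = ennreal (?Kr powr p * ?Kr * ?Kr * C0) * ?I"
      using C0 by (simp add: ennreal_of_nat_eq_real_of_nat ennreal_mult mult_ac del: card_UNIV_set)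
    finally show "(\<integral>\<^sup>+ x. enn_powr (maxop (\<lambda>x y. N (x - y)) mu f x) p \<partial>mu) \<le> ennreal (?Kr powr p * ?Kr * ?Kr * C0) * ?I" .
  qed
qed

end




context gnorm
begin

lemma weak_A:
  assumes L: "weak11 (\<lambda>x y. N (x - y)) mu"
  shows "weak11 (\<lambda>x y. N (x - y)) mu_plus"
proof -
  let ?K = "card (UNIV :: 'n set set)"
  let ?Kr = "real ?K"
  have Kr: "?Kr > 0" using card_sets_pos by simp
  from L obtain C where C: "\<And>f t. in_Lp mu 1 f \<Longrightarrow> t > 0 \<Longrightarrow>
      emeasure mu {x \<in> space mu. ennreal t < maxop (\<lambda>x y. N (x - y)) mu f x}
          \<le> ennreal (C / t) * (\<integral>\<^sup>+ x. ennreal \<bar>f x\<bar> \<partial>mu)"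
    unfolding weak11_def by blast
  define C0 where "C0 = max C 0"
  have C0: "C0 \<ge> 0" "C \<le> C0" by (auto simp: C0_def)
  show ?thesis unfolding weak11_def
  proof (rule exI[of _ "C0 * ?Kr"], intro allI impI)
    fix g :: "real^'n \<Rightarrow> real" and t :: real
    assume g: "in_Lp mu_plus 1 g" and t: "t > 0"
    let ?f = "\<lambda>y. indicator orthant y * g y"
    let ?Mf = "maxop (\<lambda>x y. N (x - y)) mu ?f"
    have f: "in_Lp mu 1 ?f" using g by (intro in_Lp_zero_ext) auto
    have fint: "(\<integral>\<^sup>+ y. ennreal \<bar>?f y\<bar> \<partial>mu) = (\<integral>\<^sup>+ y. ennreal \<bar>g y\<bar> \<partial>mu_plus)"
      using zero_ext_int[of "\<lambda>t. \<bar>t\<bar>" g] by simp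
    have "emeasure mu_plus {x \<in> space mu_plus. ennreal t < maxop (\<lambda>x y. N (x - y)) mu_plus g x}
        = emeasure mu {x \<in> orthant. ennreal t < maxop (\<lambda>x y. N (x - y)) mu_plus g x}"
      by (simp add: emeasure_plus)
    also have "\<dots> \<le> emeasure mu {x \<in> space mu. ennreal (t / ?Kr) < ?Mf x}"
    proof (rule emeasure_mono)
      show "{x \<in> space mu. ennreal (t / ?Kr) < ?Mf x} \<in> sets mu" by measurable
      show "{x \<in> orthant. ennreal t < maxop (\<lambda>x y. N (x - y)) mu_plus g x} \<subseteq> {x \<in> space mu. ennreal (t / ?Kr) < ?Mf x}"
      proof (rule subsetI)
        fix x :: "real^'n" assume "x \<in> {x \<in> orthant. ennreal t < maxop (\<lambda>x y. N (x - y)) mu_plus g x}"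
        then have x: "x \<in> orthant" "ennreal t < maxop (\<lambda>x y. N (x - y)) mu_plus g x" by auto
        then have "ennreal t < ennreal ?Kr * ?Mf x"
          using pointwise_A[of x g] by (simp add: ennreal_of_nat_eq_real_of_nat)
        then have "ennreal (t / ?Kr) < ?Mf x" using Kr t by (intro ennreal_div_less) auto
        then show "x \<in> {x \<in> space mu. ennreal (t / ?Kr) < ?Mf x}" by simp
      qed
    qed
    also have "\<dots> \<le> ennreal (C / (t / ?Kr)) * (\<integral>\<^sup>+ y. ennreal \<bar>?f y\<bar> \<partial>mu)"
      using Kr t by (intro C f) auto
    also have "\<dots> \<le> ennreal (C0 * ?Kr / t) * (\<integral>\<^sup>+ y. ennreal \<bar>g y\<bar> \<partial>mu_plus)"
    proof (unfold fint, intro mult_right_mono ennreal_leI)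
      have "C / (t / ?Kr) = C * ?Kr / t" by simp
      also have "\<dots> \<le> C0 * ?Kr / t" using C0 Kr t by (intro divide_right_mono mult_right_mono) auto
      finally show "C / (t / ?Kr) \<le> C0 * ?Kr / t" .
    qed auto
    finally show "emeasure mu_plus {x \<in> space mu_plus. ennreal t < maxop (\<lambda>x y. N (x - y)) mu_plus g x}
        \<le> ennreal (C0 * ?Kr / t) * (\<integral>\<^sup>+ y. ennreal \<bar>g y\<bar> \<partial>mu_plus)" .
  qed
qed

lemma weak_B:
  assumes L: "weak11 (\<lambda>x y. N (x - y)) mu_plus"
  shows "weak11 (\<lambda>x y. N (x - y)) mu"
proof -
  let ?K = "card (UNIV :: 'n set set)"
  let ?Kr = "real ?K"
  have Kr: "?Kr > 0" using card_sets_pos by simp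
  from L obtain C where C: "\<And>g t. in_Lp mu_plus 1 g \<Longrightarrow> t > 0 \<Longrightarrow>
      emeasure mu_plus {x \<in> space mu_plus. ennreal t < maxop (\<lambda>x y. N (x - y)) mu_plus g x}
          \<le> ennreal (C / t) * (\<integral>\<^sup>+ x. ennreal \<bar>g x\<bar> \<partial>mu_plus)"
    unfolding weak11_def by blast
  define C0 where "C0 = max C 0"
  have C0: "C0 \<ge> 0" "C \<le> C0" by (auto simp: C0_def)
  show ?thesis unfolding weak11_def
  proof (rule exI[of _ "?Kr * ?Kr * ?Kr * C0"], intro allI impI)
    fix f :: "real^'n \<Rightarrow> real" and t :: real
    assume f: "in_Lp mu 1 f" and t: "t > 0"
    have fm[measurable]: "f \<in> borel_measurable borel" using f by (simp add: in_Lp_def cong: measurable_cong_sets)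
    define \<tau> where "\<tau> = t / ?Kr"
    have \<tau>: "\<tau> > 0" using t Kr by (simp add: \<tau>_def)
    let ?I = "(\<integral>\<^sup>+ x. ennreal \<bar>f x\<bar> \<partial>mu)"
    let ?h = "\<lambda>S. maxop (\<lambda>x y. N (x - y)) mu_plus (\<lambda>z. f (reflS S z))"
    have hm[measurable]: "?h S \<in> borel_measurable borel" for S by (rule maxop_mu_plus_meas)
    define A where "A S = {x. ennreal \<tau> < ?h S (absv x)}" for S
    have A[measurable]: "A S \<in> sets borel" for S unfolding A_def by measurable
    have AS: "emeasure mu (A S) \<le> of_nat ?K * (ennreal (C0 / \<tau>) * ?I)" for S
    proof -
      let ?D = "{z. ennreal \<tau> < ?h S z}"
      have D[measurable]: "?D \<in> sets borel" by measurable
      have "emeasure mu (A S) = (\<integral>\<^sup>+ x. indicator (A S) x \<partial>mu)" using A[of S] by simp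
      also have "\<dots> = (\<integral>\<^sup>+ x. indicator ?D (absv x) \<partial>mu)"
        by (intro nn_integral_cong) (simp add: A_def indicator_def)
      also have "\<dots> = of_nat ?K * (\<integral>\<^sup>+ z. indicator ?D z * indicator orthant z \<partial>mu)"
        by (rule nn_integral_absv) simp
      also have "(\<integral>\<^sup>+ z. indicator ?D z * indicator orthant z \<partial>mu) = (\<integral>\<^sup>+ z. indicator (?D \<inter> orthant) z \<partial>mu)"
        by (intro nn_integral_cong) (simp add: indicator_def)
      also have "\<dots> = emeasure mu (?D \<inter> orthant)"
        using D orthant_borel by (intro nn_integral_indicator) simp
      also have "\<dots> = emeasure mu_plus {z \<in> space mu_plus. ennreal \<tau> < ?h S z}"
        by (subst emeasure_plus) (auto intro!: arg_cong[where f="emeasure mu"])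
      also have "\<dots> \<le> ennreal (C / \<tau>) * (\<integral>\<^sup>+ z. ennreal \<bar>f (reflS S z)\<bar> \<partial>mu_plus)"
        using \<tau> by (intro C in_Lp_refl f) 
      also have "\<dots> \<le> ennreal (C0 / \<tau>) * ?I"
        using C0 \<tau> by (intro mult_mono ennreal_leI divide_right_mono nn_plus_refl_le[of "\<lambda>x. ennreal \<bar>f x\<bar>"]) auto
      finally show ?thesis by (simp add: mult_left_mono)
    qed
    have "emeasure mu {x \<in> space mu. ennreal t < maxop (\<lambda>x y. N (x - y)) mu f x} \<le> emeasure mu (\<Union>S. A S)"
    proof (rule emeasure_mono_AE)
      show "AE x in mu. x \<in> {x \<in> space mu. ennreal t < maxop (\<lambda>x y. N (x - y)) mu f x} \<longrightarrow> x \<in> (\<Union>S. A S)"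
        using AE_mu_nz
      proof eventually_elim
        case (elim x)
        show ?case
        proof
          assume "x \<in> {x \<in> space mu. ennreal t < maxop (\<lambda>x y. N (x - y)) mu f x}"
          then have "ennreal t < (\<Sum>S\<in>UNIV. ?h S (absv x))"
            using pointwise_B[OF elim fm] by simp
          then have "\<exists>S\<in>(UNIV :: 'n set set). ennreal (t / ?Kr) < ?h S (absv x)"
            using t by (intro sum_exceeds) auto
          then obtain S where "ennreal (t / ?Kr) < ?h S (absv x)" by blast
          then show "x \<in> (\<Union>S. A S)" by (auto simp: A_def \<tau>_def)
        qed
      qed
      show "(\<Union>S. A S) \<in> sets mu" by simp
    qed
    also have "\<dots> \<le> (\<Sum>S\<in>UNIV. emeasure mu (A S))"
      by (rule emeasure_subadditive_finite) auto
    also have "\<dots> \<le> (\<Sum>S\<in>(UNIV :: 'n set set). of_nat ?K * (ennreal (C0 / \<tau>) * ?I))"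
      by (rule sum_mono) (rule AS)
    also have "\<dots> = ennreal (?Kr * ?Kr * ?Kr * C0 / t) * ?I"
    proof -
      have e: "?Kr * ?Kr * ?Kr * C0 / t = ?Kr * (?Kr * (C0 / \<tau>))" using Kr t by (simp add: \<tau>_def field_simps)
      have b: "C0 / \<tau> \<ge> 0" using C0 \<tau> by simp
      have m1: "ennreal (?Kr * (C0 / \<tau>)) = ennreal ?Kr * ennreal (C0 / \<tau>)"
        by (rule ennreal_mult) (use b in auto)
      have m2: "ennreal (?Kr * (?Kr * (C0 / \<tau>))) = ennreal ?Kr * ennreal (?Kr * (C0 / \<tau>))"
        by (rule ennreal_mult) (use b Kr in simp, use b Kr in \<open>simp only: mult_nonneg_nonneg of_nat_0_le_iff\<close>)
      have s: "(\<Sum>S\<in>(UNIV :: 'n set set). of_nat ?K * (ennreal (C0 / \<tau>) * ?I))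
          = of_nat ?K * (of_nat ?K * (ennreal (C0 / \<tau>) * ?I))"
        by (simp only: sum_constant)
      show ?thesis unfolding e m2 m1 by (simp only: sum_constant ennreal_of_nat_eq_real_of_nat mult.assoc)
    qed
    finally show "emeasure mu {x \<in> space mu. ennreal t < maxop (\<lambda>x y. N (x - y)) mu f x}
        \<le> ennreal (?Kr * ?Kr * ?Kr * C0 / t) * ?I" .
  qed
qed

end




lemma gnorm_norm: "gnorm (norm :: real^'n::finite \<Rightarrow> real) 1 1"
proof
  fix x y :: "real^'n"
  show "norm (x + y) \<le> norm x + norm y" by (rule norm_triangle_ineq)
  show "norm (c *\<^sub>R x) = \<bar>c\<bar> * norm x" for c by simp
  assume "\<And>i. \<bar>x$i\<bar> \<le> \<bar>y$i\<bar>"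
  then show "norm x \<le> norm y" unfolding norm_vec_def by (intro L2_set_mono) auto
qed simp_all

lemma linf_ge: "\<bar>x$i\<bar> \<le> linfnorm x"
  unfolding linfnorm_def by (rule Max_ge) auto

lemma linf_le: "(\<And>i. \<bar>x$i\<bar> \<le> b) \<Longrightarrow> linfnorm x \<le> b"
  unfolding linfnorm_def by (subst Max_le_iff) auto

lemma linf_attained: "\<exists>i. linfnorm x = \<bar>x$i\<bar>"
proof -
  have "linfnorm x \<in> (\<lambda>i. \<bar>x$i\<bar>) ` UNIV" unfolding linfnorm_def by (rule Max_in) auto
  then show ?thesis by auto
qed

lemma gnorm_linf: "gnorm (linfnorm :: real^'n::finite \<Rightarrow> real) (real CARD('n)) 1"
proof
  fix x y :: "real^'n"
  show "linfnorm (x + y) \<le> linfnorm x + linfnorm y"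
    by (rule linf_le) (metis abs_triangle_ineq add_mono linf_ge order_trans vector_add_component)
  show "linfnorm (c *\<^sub>R x) = \<bar>c\<bar> * linfnorm x" for c
  proof (rule antisym)
    show "linfnorm (c *\<^sub>R x) \<le> \<bar>c\<bar> * linfnorm x"
      by (rule linf_le) (simp add: abs_mult linf_ge mult_left_mono)
    obtain i where "linfnorm x = \<bar>x$i\<bar>" using linf_attained by blast
    then show "\<bar>c\<bar> * linfnorm x \<le> linfnorm (c *\<^sub>R x)"
      using linf_ge[of "c *\<^sub>R x" i] by (simp add: abs_mult)
  qed
  show "linfnorm x \<le> 1 * norm x" by (simp add: linf_le component_le_norm_cart)
  have "norm x \<le> (\<Sum>i\<in>UNIV. \<bar>x$i\<bar>)" by (rule norm_le_l1_cart)
  also have "\<dots> \<le> (\<Sum>i\<in>(UNIV::'n set). linfnorm x)" by (intro sum_mono linf_ge)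
  also have "\<dots> = real CARD('n) * linfnorm x" by simp
  finally show "norm x \<le> real CARD('n) * linfnorm x" .
  assume "\<And>i. \<bar>x$i\<bar> \<le> \<bar>y$i\<bar>"
  then show "linfnorm x \<le> linfnorm y" by (meson linf_ge linf_le order_trans)
qed simp_all

lemma gnorm_l1: "gnorm (l1norm :: real^'n::finite \<Rightarrow> real) 1 (real CARD('n))"
proof
  fix x y :: "real^'n"
  show "l1norm (x + y) \<le> l1norm x + l1norm y"
    unfolding l1norm_def sum.distrib[symmetric] by (intro sum_mono) (simp add: abs_triangle_ineq)
  show "l1norm (c *\<^sub>R x) = \<bar>c\<bar> * l1norm x" for c
    unfolding l1norm_def by (simp add: abs_mult sum_distrib_left)
  show "norm x \<le> 1 * l1norm x" unfolding l1norm_def using norm_le_l1_cart by simp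
  have "l1norm x \<le> (\<Sum>i\<in>(UNIV::'n set). norm x)" unfolding l1norm_def
    by (intro sum_mono component_le_norm_cart)
  also have "\<dots> = real CARD('n) * norm x" by simp
  finally show "l1norm x \<le> real CARD('n) * norm x" .
  assume "\<And>i. \<bar>x$i\<bar> \<le> \<bar>y$i\<bar>"
  then show "l1norm x \<le> l1norm y" unfolding l1norm_def by (intro sum_mono) auto
qed simp_all

theorem proposition2p1:
  fixes p :: real
  assumes "p > 1"
  shows "(Lp_bounded (rho2 :: real^'n \<Rightarrow> _) mu p \<longleftrightarrow> Lp_bounded (rho2 :: real^'n \<Rightarrow> _) mu_plus p)
       \<and> (weak11 (rho2 :: real^'n \<Rightarrow> _) mu \<longleftrightarrow> weak11 (rho2 :: real^'n \<Rightarrow> _) mu_plus)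
       \<and> (Lp_bounded (rhoinf :: real^'n \<Rightarrow> _) mu p \<longleftrightarrow> Lp_bounded (rhoinf :: real^'n \<Rightarrow> _) mu_plus p)
       \<and> (weak11 (rhoinf :: real^'n \<Rightarrow> _) mu \<longleftrightarrow> weak11 (rhoinf :: real^'n \<Rightarrow> _) mu_plus)
       \<and> (Lp_bounded (rho1 :: real^'n \<Rightarrow> _) mu p \<longleftrightarrow> Lp_bounded (rho1 :: real^'n \<Rightarrow> _) mu_plus p)
       \<and> (weak11 (rho1 :: real^'n \<Rightarrow> _) mu \<longleftrightarrow> weak11 (rho1 :: real^'n \<Rightarrow> _) mu_plus)"
proof -
  have e2: "(rho2 :: real^'n \<Rightarrow> _) = (\<lambda>x y. norm (x - y))" by (simp add: fun_eq_iff rho2_def)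
  have ei: "(rhoinf :: real^'n \<Rightarrow> _) = (\<lambda>x y. linfnorm (x - y))" by (simp add: fun_eq_iff rhoinf_def)
  have e1: "(rho1 :: real^'n \<Rightarrow> _) = (\<lambda>x y. l1norm (x - y))" by (simp add: fun_eq_iff rho1_def)
  interpret n2: gnorm "norm :: real^'n \<Rightarrow> real" 1 1 by (rule gnorm_norm)
  interpret ni: gnorm "linfnorm :: real^'n \<Rightarrow> real" "real CARD('n)" 1 by (rule gnorm_linf)
  interpret n1: gnorm "l1norm :: real^'n \<Rightarrow> real" 1 "real CARD('n)" by (rule gnorm_l1)
  show ?thesis unfolding e2 ei e1
    using assms n2.Lp_A n2.Lp_B n2.weak_A n2.weak_B ni.Lp_A ni.Lp_B ni.weak_A ni.weak_B
      n1.Lp_A n1.Lp_B n1.weak_A n1.weak_B by blast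
qed


end
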